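(* Assume the setting below (in particular $Z_1,Z_2,\dots$ i.i.d. with law $\pi$). Then for any $\alpha\in(0,\alpha_\infty]$, any $p\ge2$ and any $n\in\mathbb N$, $$\mathbb E^{1/p}\bigl[\|J^{(0)}_n\|^p\bigr]\le \mathsf D_1\sqrt{\alpha a p}\,\|\varepsilon\|_\infty,\qquad \mathsf D_1=\sqrt{2\kappa_Q}/a .$$
   Context: Setting: $d\ge1$; $(\mathsf Z,\mathcal Z)$ is a measurable space with a probability measure $\pi$; $\mathbf A:\mathsf Z\to\mathbb R^{d\times d}$ and $\mathbf b:\mathsf Z\to\mathbb R^d$ are measurable, $\bar{\mathbf A}=\int\mathbf A\,d\pi$, $\bar{\mathbf b}=\int\mathbf b\,d\pi$. $\|\cdot\|$ denotes the Euclidean norm on vectors and the spectral norm on matrices. Assume $-\bar{\mathbf A}$ is Hurwitz (every eigenvalue of $\bar{\mathbf A}$ has positive real part) and $C_A:=\sup_{z}\|\mathbf A(z)\|\vee\sup_z\|\tilde{\mathbf A}(z)\|<\infty$, where $\tilde{\mathbf A}(z)=\mathbf A(z)-\bar{\mathbf A}$. Let $\theta^\star=\bar{\mathbf A}^{-1}\bar{\mathbf b}$, $\tilde{\mathbf b}(z)=\mathbf b(z)-\bar{\mathbf b}$, $\varepsilon(z)=\tilde{\mathbf A}(z)\theta^\star-\tilde{\mathbf b}(z)$, and assume $\|\varepsilon\|_\infty:=\sup_z\|\varepsilon(z)\|<\infty$. Let $Q$ be the unique symmetric positive definite matrix with $\bar{\mathbf A}^\top Q+Q\bar{\mathbf A}=\mathrm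 I$; $\|x\|_Q=(x^\top Qx)^{1/2}$, $\|B\|_Q=\max_{\|x\|_Q=1}\|Bx\|_Q$; $\kappa_Q=\lambda_{\max}(Q)/\lambda_{\min}(Q)$; $a=1/(2\|Q\|)$; $\alpha_\infty=\min\{1/(2\|\bar{\mathbf A}\|_Q^2\|Q\|),\ \|Q\|\}$. $Z_1,Z_2,\dots$ are i.i.d. $\mathsf Z$-valued random variables with distribution $\pi$. For a step size $\alpha>0$, define $J^{(0)}_0=0$ and $J^{(0)}_n=(\mathrm I-\alpha\bar{\mathbf A})J^{(0)}_{n-1}-\alpha\varepsilon(Z_n)$ for $n\ge1$. *)

theory Defs
  imports "HOL-Probability.Probability"
begin

definition pos_hurwitz :: "real^'d^'d \<Rightarrow> bool" where
  "pos_hurwitz M \<longleftrightarrow>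
     (\<forall>(l::complex) (v::complex^'d). v \<noteq> 0 \<and>
        (\<chi> i. \<Sum>j\<in>UNIV. complex_of_real (M$i$j) * v$j) = l *s v \<longrightarrow> Re l > 0)"

definition spec_norm :: "real^'n^'m \<Rightarrow> real" where
  "spec_norm M = onorm (\<lambda>x. M *v x)"

definition qnorm :: "real^'d^'d \<Rightarrow> real^'d \<Rightarrow> real" where
  "qnorm Q x = sqrt (x \<bullet> (Q *v x))"

definition qmnorm :: "real^'d^'d \<Rightarrow> real^'d^'d \<Rightarrow> real" where
  "qmnorm Q B = Sup {qnorm Q (B *v x) | x. qnorm Q x = 1}"

definition real_eigenvalues :: "real^'d^'d \<Rightarrow> real set" where
  "real_eigenvalues Q = {l. \<exists>v. v \<noteq> 0 \<and> Q *v v = l *\<^sub>R v}"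

definition kappa :: "real^'d^'d \<Rightarrow> real" where
  "kappa Q = Max (real_eigenvalues Q) / Min (real_eigenvalues Q)"

fun J0 :: "real \<Rightarrow> real^'d^'d \<Rightarrow> ('z \<Rightarrow> real^'d) \<Rightarrow> (nat \<Rightarrow> 'w \<Rightarrow> 'z) \<Rightarrow> nat \<Rightarrow> 'w \<Rightarrow> real^'d" where
  "J0 \<alpha> Ab eps Z 0 \<omega> = 0"
| "J0 \<alpha> Ab eps Z (Suc n) \<omega> = (mat 1 - \<alpha> *\<^sub>R Ab) *v J0 \<alpha> Ab eps Z n \<omega> - \<alpha> *\<^sub>R eps (Z (Suc n) \<omega>)"

end

theory Submission
  imports Defs
begin

lemma sinh_convex: "convex_on {0..} (sinh :: real \<Rightarrow> real)"
  by (intro convex_on_realI[where f'=cosh])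
     (auto intro!: derivative_eq_intros simp: cosh_real_nonneg_le_iff)

lemma sinh_star:
  fixes l T :: real
  assumes "0 \<le> l" "l \<le> 1" "0 \<le> T"
  shows "sinh (l * T) \<le> l * sinh T"
proof -
  have "sinh ((1 - l) *\<^sub>R 0 + l *\<^sub>R T) \<le> (1 - l) * sinh 0 + l * sinh T"
    using assms by (intro convex_onD[OF sinh_convex]) auto
  then show ?thesis by simp
qed

lemma sinh_div_mono:
  fixes s t :: real
  assumes "0 < s" "s \<le> t"
  shows "sinh s / s \<le> sinh t / t"
proof -
  have "sinh ((s/t) * t) \<le> (s/t) * sinh t"
    using assms by (intro sinh_star) auto
  then have "sinh s \<le> s * sinh t / t" using assms by simp
  then show ?thesis using assms by (simp add: field_simps)
qed

lemma coshsqrt_convex_pos: "convex_on {0<..} (\<lambda>w::real. cosh (sqrt w))"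
proof (rule convex_on_realI[where f'="\<lambda>w. sinh (sqrt w) / (2 * sqrt w)"])
  show "connected {0::real<..}" by simp
next
  fix x :: real assume "x \<in> {0<..}"
  then have x: "x > 0" by simp
  show "((\<lambda>w. cosh (sqrt w)) has_real_derivative sinh (sqrt x) / (2 * sqrt x)) (at x)"
    using x by (auto intro!: derivative_eq_intros simp: field_simps)
next
  fix x y :: real assume xy: "x \<in> {0<..}" "y \<in> {0<..}" "x \<le> y"
  then have "sinh (sqrt x) / sqrt x \<le> sinh (sqrt y) / sqrt y"
    by (intro sinh_div_mono) auto
  then have "sinh (sqrt x) / sqrt x / 2 \<le> sinh (sqrt y) / sqrt y / 2" by simp
  then show "sinh (sqrt x) / (2 * sqrt x) \<le> sinh (sqrt y) / (2 * sqrt y)"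
    by (simp add: divide_divide_eq_left mult.commute)
qed
lemma coshsqrt_chord:
  fixes x y th :: real
  assumes "0 \<le> x" "x \<le> y" "0 \<le> th" "th \<le> 1"
  shows "cosh (sqrt ((1 - th) * x + th * y)) \<le> (1 - th) * cosh (sqrt x) + th * cosh (sqrt y)"
proof (cases "x = 0")
  case False
  then have "x > 0" "y > 0" using assms by auto
  then show ?thesis
    using convex_onD[OF coshsqrt_convex_pos, of th x y] assms by auto
next
  case True
  define T where "T = sqrt y / 2"
  have T: "T \<ge> 0" using assms by (auto simp: T_def)
  have h1: "sinh (sqrt th * T) \<le> sqrt th * sinh T"
    using assms T by (intro sinh_star) (auto simp: real_sqrt_le_1_iff)
  have h0: "0 \<le> sinh (sqrt th * T)" using T assms by auto
  have "(sinh (sqrt th * T))^2 \<le> (sqrt th * sinh T)^2"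
    using h1 h0 by (intro power_mono) auto
  then have h2: "(sinh (sqrt th * T))^2 \<le> th * (sinh T)^2"
    using assms by (simp add: power_mult_distrib)
  have c2: "\<And>z::real. cosh (2*z) = 1 + 2 * (sinh z)^2"
  proof -
    fix z :: real
    have e: "2*z = z+z" by simp
    have "cosh (2*z) = cosh z * cosh z + sinh z * sinh z" unfolding e by (rule cosh_add)
    also have "\<dots> = (cosh z)^2 + (sinh z)^2" by (simp add: power2_eq_square)
    also have "\<dots> = 1 + 2 * (sinh z)^2" using cosh_square_eq[of z] by simp
    finally show "cosh (2*z) = 1 + 2 * (sinh z)^2" .
  qed
  have "cosh (sqrt (th * y)) = cosh (2 * (sqrt th * T))"
    by (simp add: real_sqrt_mult T_def)
  also have "\<dots> = 1 + 2 * (sinh (sqrt th * T))^2" by (rule c2)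
  also have "\<dots> \<le> 1 + 2 * (th * (sinh T)^2)" using h2 by simp
  also have "\<dots> = (1 - th) * 1 + th * cosh (2 * T)" unfolding c2 by (simp add: algebra_simps)
  also have "\<dots> = (1 - th) * cosh (sqrt x) + th * cosh (sqrt y)" using True by (simp add: T_def)
  finally show ?thesis using True by simp
qed

lemma exp_neg_chord:
  fixes s c :: real
  assumes "0 \<le> s" "s \<le> c" "0 < c"
  shows "cosh s - sinh s \<le> cosh c - s / c * sinh c"
proof -
  define th where "th = s / c"
  have th: "0 \<le> th" "th \<le> 1" using assms by (auto simp: th_def)
  have "exp ((1 - th) *\<^sub>R 0 + th *\<^sub>R (-c)) \<le> (1 - th) * exp 0 + th * exp (-c)"
    using convex_onD[OF convex_on_exp[of 1], of th 0 "-c"] th by simp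
  then have "exp (- s) \<le> (1 - th) + th * exp (-c)"
    using assms by (simp add: th_def)
  moreover have "exp (-s) = cosh s - sinh s" "exp (-c) = cosh c - sinh c"
    by (simp_all add: cosh_minus_sinh)
  moreover have "(1 - th) + th * (cosh c - sinh c) \<le> cosh c - th * sinh c"
  proof -
    have "(1 - th) * (cosh c - 1) \<ge> 0" using th cosh_real_ge_1[of c] by simp
    then show ?thesis by (simp add: algebra_simps)
  qed
  ultimately show ?thesis by (simp add: th_def)
qed

definition KK :: "real \<Rightarrow> real \<Rightarrow> real" where
  "KK r c = (if r = 0 then 0 else sinh r * sinh c / (r * c))"

lemma cosh_step_real:
  fixes r s c u :: real
  assumes r: "0 \<le> r" and s: "0 \<le> s" "s \<le> c" and c: "0 < c" and u: "\<bar>u\<bar> \<le> r * s"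
  shows "cosh (sqrt (r^2 + 2 * u + s^2)) \<le> cosh r * cosh c + KK r c * u"
proof (cases "r = 0 \<or> s = 0")
  case True
  then have u0: "u = 0" using u by auto
  show ?thesis
  proof (cases "r = 0")
    case True
    then show ?thesis using u0 s by (simp add: KK_def cosh_real_nonneg_le_iff)
  next
    case False
    then have "s = 0" using \<open>r = 0 \<or> s = 0\<close> by simp
    then show ?thesis using u0 r cosh_real_ge_1[of c] by simp
  qed
next
  case False
  then have rp: "r > 0" and sp: "s > 0" using r s by auto
  define th where "th = (u + r * s) / (2 * r * s)"
  have th: "0 \<le> th" "th \<le> 1" using u rp sp by (auto simp: th_def field_simps abs_le_iff)
  have w: "r^2 + 2 * u + s^2 = (1 - th) * (r - s)^2 + th * (r + s)^2"
    using rp sp by (simp add: th_def field_simps power2_eq_square)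
  have "cosh (sqrt (r^2 + 2 * u + s^2)) \<le> (1 - th) * cosh (sqrt ((r - s)^2)) + th * cosh (sqrt ((r + s)^2))"
  proof -
    have "0 \<le> (r - s)^2" by simp
    moreover have "(r - s)^2 \<le> (r + s)^2" using r s by (simp add: power2_eq_square algebra_simps)
    ultimately show ?thesis unfolding w using th by (intro coshsqrt_chord) auto
  qed
  also have "\<dots> = (1 - th) * cosh (r - s) + th * cosh (r + s)"
    using r s by (simp add: cosh_real_abs)
  also have "\<dots> = cosh r * cosh s + (u / (r * s)) * (sinh r * sinh s)"
    using rp sp by (simp add: cosh_add cosh_diff th_def field_simps)
  also have "\<dots> \<le> cosh r * cosh c + KK r c * u"
  proof -
    define v where "v = u / (r * s)"
    have v: "\<bar>v\<bar> \<le> 1" using u rp sp by (simp add: v_def abs_div divide_le_eq_1 abs_mult)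
    define D where "D = s / c * sinh c - sinh s"
    have "sinh s / s \<le> sinh c / c" using sp s by (intro sinh_div_mono) auto
    then have D0: "D \<ge> 0" using sp c by (simp add: D_def field_simps)
    have D1: "D \<le> cosh c - cosh s" using exp_neg_chord[of s c] s c by (simp add: D_def)
    have sr: "0 \<le> sinh r" "sinh r \<le> cosh r" using r by (auto simp: sinh_le_cosh_real)
    have "- v * sinh r * D \<le> sinh r * D"
    proof -
      have "- v * (sinh r * D) \<le> 1 * (sinh r * D)"
        using v sr D0 by (intro mult_right_mono) auto
      then show ?thesis by simp
    qed
    also have "\<dots> \<le> cosh r * D" using sr D0 by (intro mult_right_mono) auto
    also have "\<dots> \<le> cosh r * (cosh c - cosh s)" using D1 r by (intro mult_left_mono) auto
    finally have key: "- v * sinh r * D \<le> cosh r * (cosh c - cosh s)" .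
    have "KK r c * u = v * sinh r * (s / c * sinh c)"
      using rp sp c by (simp add: KK_def v_def field_simps)
    then show ?thesis using key unfolding v_def[symmetric] by (simp add: D_def algebra_simps)
  qed
  finally show ?thesis .
qed

lemma cosh_le_exp_sq: "cosh (x::real) \<le> exp (x^2 / 2)"
proof -
  have *: "cosh y \<le> exp (y^2/2)" if y: "y \<ge> 0" for y :: real
  proof -
    have "- (2*y) * (1/2) + ln (1 + (1/2) * (exp (2*y) - 1)) \<le> (2*y)^2 / 8"
      using Hoeffdings_lemma_aux[of "2*y" "1/2"] y by simp
    moreover have "1 + (1/2) * (exp (2*y) - 1) = exp y * cosh y"
      by (simp add: cosh_def field_simps flip: exp_add)
    moreover have "cosh y > 0" by (simp add: cosh_real_pos)
    ultimately have "- y + (y + ln (cosh y)) \<le> y^2/2"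
      by (simp add: ln_mult power2_eq_square)
    then have "ln (cosh y) \<le> y^2/2" by simp
    then show ?thesis using \<open>cosh y > 0\<close> by (metis exp_le_cancel_iff exp_ln)
  qed
  show ?thesis using *[of "\<bar>x\<bar>"] by (simp add: cosh_real_abs)
qed

lemma sym_dot:
  fixes Q :: "real^'d^'d"
  assumes "transpose Q = Q"
  shows "x \<bullet> (Q *v y) = y \<bullet> (Q *v x)"
proof -
  have "x \<bullet> (Q *v y) = (x v* Q) \<bullet> y" by (simp add: dot_lmul_matrix)
  also have "x v* Q = transpose Q *v x" by simp
  also have "\<dots> = Q *v x" using assms by simp
  finally show ?thesis by (simp add: inner_commute)
qed

lemma psd_cs:
  fixes P :: "real^'d^'d"
  assumes sym: "transpose P = P" and psd: "\<And>x. 0 \<le> x \<bullet> (P *v x)"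
  shows "(x \<bullet> (P *v y))^2 \<le> (x \<bullet> (P *v x)) * (y \<bullet> (P *v y))"
proof -
  define a where "a = x \<bullet> (P *v x)"
  define b where "b = x \<bullet> (P *v y)"
  define c where "c = y \<bullet> (P *v y)"
  have quad: "0 \<le> a + 2 * t * b + t^2 * c" for t
  proof -
    have "0 \<le> (x + t *\<^sub>R y) \<bullet> (P *v (x + t *\<^sub>R y))" by (rule psd)
    also have "\<dots> = a + t * (x \<bullet> (P *v y)) + t * (y \<bullet> (P *v x)) + t^2 * c"
      by (simp add: a_def c_def algebra_simps inner_add_left inner_add_right power2_eq_square)
    also have "y \<bullet> (P *v x) = b" using sym_dot[OF sym] by (simp add: b_def)
    finally show ?thesis by (simp add: b_def algebra_simps)
  qed
  have c0: "c \<ge> 0" using psd by (simp add: c_def)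
  show ?thesis
  proof (cases "c = 0")
    case True
    have "b = 0"
    proof (rule ccontr)
      assume "b \<noteq> 0"
      have "0 \<le> a + 2 * (-(a+1)/(2*b)) * b + (-(a+1)/(2*b))^2 * c" by (rule quad)
      then show False using True \<open>b \<noteq> 0\<close> by (simp add: field_simps)
    qed
    then show ?thesis using True by (simp add: b_def c_def)
  next
    case False
    then have cp: "c > 0" using c0 by simp
    have "0 \<le> a + 2 * (-b/c) * b + (-b/c)^2 * c" by (rule quad)
    then have "0 \<le> a - b^2 / c" using cp by (simp add: field_simps power2_eq_square)
    then have "b^2 \<le> a * c" using cp by (simp add: field_simps)
    then show ?thesis by (simp add: a_def b_def c_def)
  qed
qed

lemma scale_quad:
  fixes Q :: "real^'d^'d"
  shows "(t *\<^sub>R x) \<bullet> (Q *v (t *\<^sub>R x)) = t^2 * (x \<bullet> (Q *v x))"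
  by (simp add: matrix_vector_mult_scaleR power2_eq_square)

lemma spec_norm_mv:
  fixes M :: "real^'n^'m"
  shows "norm (M *v x) \<le> spec_norm M * norm x"
  unfolding spec_norm_def by (rule onorm) simp

lemma quad_le_spec:
  fixes Q :: "real^'d^'d"
  shows "x \<bullet> (Q *v x) \<le> spec_norm Q * (x \<bullet> x)"
proof -
  have "x \<bullet> (Q *v x) \<le> norm x * norm (Q *v x)" by (rule norm_cauchy_schwarz)
  also have "\<dots> \<le> norm x * (spec_norm Q * norm x)"
    by (intro mult_left_mono spec_norm_mv) auto
  finally show ?thesis by (simp add: dot_square_norm power2_eq_square algebra_simps)
qed

lemma entry_le_spec:
  fixes M :: "real^'n^'m"
  shows "\<bar>M $ i $ j\<bar> \<le> spec_norm M"
proof -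
  have "M $ i $ j = (M *v axis j 1) $ i"
    by (simp add: matrix_vector_mult_basis column_def)
  also have "\<bar>\<dots>\<bar> \<le> norm (M *v axis j 1)" by (rule component_le_norm_cart)
  also have "\<dots> \<le> spec_norm M * norm (axis j (1::real))" by (rule spec_norm_mv)
  finally show ?thesis by simp
qed

lemma norm_le_spec:
  fixes M :: "real^'n^'m"
  shows "norm M \<le> real CARD('m) * real CARD('n) * spec_norm M"
proof -
  have "norm M \<le> (\<Sum>i\<in>UNIV. norm (M $ i))" by (simp add: norm_vec_def L2_set_le_sum)
  also have "\<dots> \<le> (\<Sum>i\<in>(UNIV::'m set). (\<Sum>j\<in>(UNIV::'n set). \<bar>M $ i $ j\<bar>))"
    by (intro sum_mono norm_le_l1_cart)
  also have "\<dots> \<le> (\<Sum>i\<in>(UNIV::'m set). (\<Sum>j\<in>(UNIV::'n set). spec_norm M))"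
    by (intro sum_mono entry_le_spec)
  finally show ?thesis by simp
qed

lemma transpose_lincomb: "transpose (Q - m *\<^sub>R (mat 1 :: real^'d^'d)) = transpose Q - m *\<^sub>R mat 1"
  by (simp add: transpose_def vec_eq_iff mat_def)

lemma rayleigh_min:
  fixes Q :: "real^'d^'d"
  assumes sym: "transpose Q = Q"
  obtains m v where "v \<noteq> 0" "Q *v v = m *\<^sub>R v" "\<And>x. m * (x \<bullet> x) \<le> x \<bullet> (Q *v x)"
proof -
  let ?f = "\<lambda>x::real^'d. x \<bullet> (Q *v x)"
  let ?S = "sphere (0::real^'d) 1"
  have ne: "?S \<noteq> {}"
  proof -
    obtain i :: 'd where True by simp
    have "axis i (1::real) \<in> ?S" by simp
    then show ?thesis by blast
  qed
  have cont: "continuous_on ?S ?f"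
    by (intro continuous_intros linear_continuous_on) simp
  obtain v where v: "v \<in> ?S" "\<And>y. y \<in> ?S \<Longrightarrow> ?f v \<le> ?f y"
    using continuous_attains_inf[OF compact_sphere ne cont] by blast
  define m where "m = ?f v"
  have low: "m * (x \<bullet> x) \<le> ?f x" for x
  proof (cases "x = 0")
    case True then show ?thesis by simp
  next
    case False
    define y where "y = (1 / norm x) *\<^sub>R x"
    have y: "y \<in> ?S" using False by (simp add: y_def)
    have xy: "x = norm x *\<^sub>R y" using False by (simp add: y_def)
    have "?f x = ?f (norm x *\<^sub>R y)" using xy by simp
    also have "\<dots> = (norm x)^2 * ?f y" by (rule scale_quad)
    finally have "?f x = (norm x)^2 * ?f y" .
    moreover have "m \<le> ?f y" using v(2)[OF y] by (simp add: m_def)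
    moreover have "x \<bullet> x = (norm x)^2" by (simp add: power2_norm_eq_inner)
    ultimately show ?thesis by (simp add: mult.commute[of m] mult_left_mono)
  qed
  define P where "P = Q - m *\<^sub>R (mat 1 :: real^'d^'d)"
  have Px: "P *v x = Q *v x - m *\<^sub>R x" for x
    by (simp add: P_def matrix_vector_mult_diff_rdistrib flip: scaleR_matrix_vector_assoc)
  have Psym: "transpose P = P" using sym by (simp add: P_def transpose_lincomb)
  have Ppsd: "0 \<le> x \<bullet> (P *v x)" for x using low[of x] by (simp add: Px inner_diff_right)
  have vv: "v \<bullet> v = 1" using v(1) by (simp add: dot_square_norm)
  have Pv0: "v \<bullet> (P *v v) = 0" using vv by (simp add: Px inner_diff_right m_def)
  have "((P *v v) \<bullet> (P *v v))^2 \<le> ((P *v v) \<bullet> (P *v (P *v v))) * (v \<bullet> (P *v v))"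
    using psd_cs[OF Psym Ppsd] sym_dot[OF Psym] by metis
  then have "(P *v v) \<bullet> (P *v v) = 0" using Pv0 by simp
  then have "P *v v = 0" by simp
  then have "Q *v v = m *\<^sub>R v" by (simp add: Px)
  moreover have "v \<noteq> 0" using v(1) by auto
  ultimately show ?thesis using that low by blast
qed

lemma eig_facts:
  fixes Q :: "real^'d^'d"
  assumes sym: "transpose Q = Q" and pd: "\<And>x. x \<noteq> 0 \<Longrightarrow> x \<bullet> (Q *v x) > 0"
  shows "finite (real_eigenvalues Q)"
    and "Min (real_eigenvalues Q) > 0"
    and "\<And>x. Min (real_eigenvalues Q) * (x \<bullet> x) \<le> x \<bullet> (Q *v x)"
    and "\<And>x. x \<bullet> (Q *v x) \<le> Max (real_eigenvalues Q) * (x \<bullet> x)"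
proof -
  let ?E = "real_eigenvalues Q"
  obtain m v1 where v1: "v1 \<noteq> 0" "Q *v v1 = m *\<^sub>R v1" and low: "\<And>x. m * (x \<bullet> x) \<le> x \<bullet> (Q *v x)"
    using rayleigh_min[OF sym] by blast
  have negmv: "(- Q) *v x = - (Q *v x)" for x
    by (simp add: vec_eq_iff matrix_vector_mult_def sum_negf)
  have symn: "transpose (- Q) = - Q" using sym by (simp add: transpose_def vec_eq_iff)
  obtain m' v2 where v2: "v2 \<noteq> 0" "(- Q) *v v2 = m' *\<^sub>R v2" and up': "\<And>x. m' * (x \<bullet> x) \<le> x \<bullet> ((- Q) *v x)"
    using rayleigh_min[OF symn] by blast
  define M where "M = - m'"
  have v2': "Q *v v2 = M *\<^sub>R v2" using v2(2) by (simp add: negmv M_def minus_equation_iff[of "Q *v v2"])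
  have up: "x \<bullet> (Q *v x) \<le> M * (x \<bullet> x)" for x using up'[of x] by (simp add: negmv M_def)
  have mE: "m \<in> ?E" using v1 by (auto simp: real_eigenvalues_def)
  have ME: "M \<in> ?E" using v2 v2' by (auto simp: real_eigenvalues_def)
  have bnd: "m \<le> l \<and> l \<le> M" if lE: "l \<in> ?E" for l
  proof -
    obtain v where v: "v \<noteq> 0" "Q *v v = l *\<^sub>R v" using lE by (auto simp: real_eigenvalues_def)
    have vv: "v \<bullet> v > 0" using v by simp
    have e: "v \<bullet> (Q *v v) = l * (v \<bullet> v)" using v by simp
    show ?thesis using low[of v] up[of v] vv unfolding e by (simp add: mult_le_cancel_right)
  qed
  define g where "g l = (SOME v. v \<noteq> 0 \<and> Q *v v = l *\<^sub>R v)" for l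
  have g: "g l \<noteq> 0 \<and> Q *v g l = l *\<^sub>R g l" if "l \<in> ?E" for l
    using that unfolding g_def real_eigenvalues_def by (rule CollectE) (rule someI_ex)
  have inj: "inj_on g ?E"
  proof (rule inj_onI)
    fix l1 l2 assume l: "l1 \<in> ?E" "l2 \<in> ?E" "g l1 = g l2"
    then have "l1 *\<^sub>R g l1 = l2 *\<^sub>R g l1" using g[OF l(1)] g[OF l(2)] by metis
    then show "l1 = l2" using g[OF l(1)] by (simp add: scaleR_cancel_right)
  qed
  have orth: "pairwise orthogonal (g ` ?E)"
  proof (rule pairwiseI)
    fix x y assume "x \<in> g ` ?E" "y \<in> g ` ?E" "x \<noteq> y"
    then obtain l1 l2 where l: "l1 \<in> ?E" "l2 \<in> ?E" "x = g l1" "y = g l2" by blast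
    have "l1 * (x \<bullet> y) = y \<bullet> (Q *v x)" using g[OF l(1)] l by (simp add: inner_commute)
    also have "\<dots> = x \<bullet> (Q *v y)" by (rule sym_dot[OF sym, symmetric])
    also have "\<dots> = l2 * (x \<bullet> y)" using g[OF l(2)] l by simp
    finally have "(l1 - l2) * (x \<bullet> y) = 0" by (simp add: algebra_simps)
    moreover have "l1 \<noteq> l2" using \<open>x \<noteq> y\<close> l by auto
    ultimately show "orthogonal x y" by (simp add: orthogonal_def)
  qed
  have "0 \<notin> g ` ?E" using g by auto
  then have "independent (g ` ?E)" using orth by (intro pairwise_orthogonal_independent)
  then have "finite (g ` ?E)" using independent_bound by blast
  then show fin: "finite ?E" using inj by (rule finite_imageD)
  have minE: "Min ?E = m" using fin mE bnd by (intro Min_eqI) auto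
  have maxE: "Max ?E = M" using fin ME bnd by (intro Max_eqI) auto
  show "Min ?E > 0"
    using pd[OF v1(1)] v1 inner_ge_zero[of v1] unfolding minE by (auto simp: zero_less_mult_iff)
  show "Min ?E * (x \<bullet> x) \<le> x \<bullet> (Q *v x)" for x using low unfolding minE .
  show "x \<bullet> (Q *v x) \<le> Max ?E * (x \<bullet> x)" for x using up unfolding maxE .
qed

lemma dot_transpose:
  fixes A :: "real^'d^'d"
  shows "x \<bullet> (transpose A *v z) = (A *v x) \<bullet> z"
  by (metis dot_lmul_matrix vector_transpose_matrix)

lemma spec_pos:
  fixes Q :: "real^'d^'d"
  assumes pd: "\<And>x. x \<noteq> 0 \<Longrightarrow> x \<bullet> (Q *v x) > 0"
  shows "spec_norm Q > 0"
proof -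
  obtain i :: 'd where True by simp
  let ?x = "axis i (1::real)"
  have "0 < ?x \<bullet> (Q *v ?x)" by (rule pd) simp
  also have "\<dots> \<le> spec_norm Q * (?x \<bullet> ?x)" by (rule quad_le_spec)
  finally show ?thesis by simp
qed

lemma quad_add:
  fixes Q :: "real^'d^'d"
  assumes sym: "transpose Q = Q"
  shows "(x + y) \<bullet> (Q *v (x + y)) = x \<bullet> (Q *v x) + 2 * (x \<bullet> (Q *v y)) + y \<bullet> (Q *v y)"
  using sym_dot[OF sym, of y x]
  by (simp add: matrix_vector_right_distrib inner_add_left inner_add_right)

lemma quad_nonneg:
  fixes Q :: "real^'d^'d"
  assumes pd: "\<And>x. x \<noteq> 0 \<Longrightarrow> x \<bullet> (Q *v x) > 0"
  shows "0 \<le> x \<bullet> (Q *v x)"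
  using pd[of x] by (cases "x = 0") auto

lemma qcs:
  fixes Q :: "real^'d^'d"
  assumes sym: "transpose Q = Q" and pd: "\<And>x. x \<noteq> 0 \<Longrightarrow> x \<bullet> (Q *v x) > 0"
  shows "\<bar>x \<bullet> (Q *v y)\<bar> \<le> sqrt (x \<bullet> (Q *v x)) * sqrt (y \<bullet> (Q *v y))"
proof -
  have "(x \<bullet> (Q *v y))^2 \<le> (x \<bullet> (Q *v x)) * (y \<bullet> (Q *v y))"
    using psd_cs[OF sym quad_nonneg[OF pd]] .
  then have "sqrt ((x \<bullet> (Q *v y))^2) \<le> sqrt ((x \<bullet> (Q *v x)) * (y \<bullet> (Q *v y)))"
    by (rule real_sqrt_le_mono)
  then show ?thesis by (simp add: real_sqrt_mult)
qed

lemma qmnorm_bound: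
  fixes Q B :: "real^'d^'d"
  assumes sym: "transpose Q = Q" and pd: "\<And>x. x \<noteq> 0 \<Longrightarrow> x \<bullet> (Q *v x) > 0"
  shows "(B *v x) \<bullet> (Q *v (B *v x)) \<le> (qmnorm Q B)^2 * (x \<bullet> (Q *v x))"
    and "qmnorm Q B \<ge> 0"
proof -
  let ?f = "\<lambda>x::real^'d. x \<bullet> (Q *v x)"
  let ?S = "{qnorm Q (B *v x) | x. qnorm Q x = 1}"
  let ?lmin = "Min (real_eigenvalues Q)" and ?lmax = "Max (real_eigenvalues Q)"
  note E = eig_facts[OF sym pd]
  have unit: "qnorm Q ((1 / sqrt (?f x)) *\<^sub>R x) = 1" if "x \<noteq> 0" for x
  proof -
    have "?f x > 0" using pd that by blast
    then show ?thesis unfolding qnorm_def scale_quad by (simp add: power_divide)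
  qed
  obtain i :: 'd where True by simp
  have ne: "?S \<noteq> {}" using unit[of "axis i 1"] by auto
  have bdd: "bdd_above ?S"
  proof (rule bdd_aboveI)
    fix s assume "s \<in> ?S"
    then obtain y where s: "s = qnorm Q (B *v y)" and y: "qnorm Q y = 1" by blast
    have fy: "?f y = 1" using y unfolding qnorm_def using quad_nonneg[OF pd, of y] by simp
    have "?f (B *v y) \<le> ?lmax * ((B *v y) \<bullet> (B *v y))" by (rule E(4))
    also have "(B *v y) \<bullet> (B *v y) = (norm (B *v y))^2" by (simp add: power2_norm_eq_inner)
    finally have c1: "?f (B *v y) \<le> ?lmax * (norm (B *v y))^2" .
    have lmax: "?lmax > 0"
    proof -
      have "0 < ?f (axis i 1)" by (rule pd) simp
      also have "\<dots> \<le> ?lmax * (axis i (1::real) \<bullet> axis i 1)" by (rule E(4))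
      finally show ?thesis by simp
    qed
    have "(norm (B *v y))^2 \<le> (spec_norm B * norm y)^2"
      by (intro power_mono spec_norm_mv) auto
    also have "(spec_norm B * norm y)^2 = (spec_norm B)^2 * (y \<bullet> y)"
      by (simp add: power_mult_distrib power2_norm_eq_inner)
    also have "\<dots> \<le> (spec_norm B)^2 * (1 / ?lmin)"
      using E(3)[of y] E(2) fy by (intro mult_left_mono) (auto simp: field_simps)
    finally have c2: "(norm (B *v y))^2 \<le> (spec_norm B)^2 * (1 / ?lmin)" .
    have "?f (B *v y) \<le> ?lmax * ((spec_norm B)^2 * (1 / ?lmin))"
      using c1 mult_left_mono[OF c2, of ?lmax] lmax by linarith
    then show "s \<le> sqrt (?lmax * ((spec_norm B)^2 * (1 / ?lmin)))"
      unfolding s qnorm_def by (rule real_sqrt_le_mono)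
  qed
  have N0: "qmnorm Q B \<ge> 0"
  proof -
    obtain s where "s \<in> ?S" using ne by blast
    moreover then have "s \<ge> 0" using quad_nonneg[OF pd] by (auto simp: qnorm_def)
    ultimately show ?thesis unfolding qmnorm_def using cSup_upper[OF _ bdd] by fastforce
  qed
  then show "qmnorm Q B \<ge> 0" .
  show "?f (B *v x) \<le> (qmnorm Q B)^2 * ?f x"
  proof (cases "x = 0")
    case True then show ?thesis by simp
  next
    case False
    have fx: "?f x > 0" using pd False by blast
    define y where "y = (1 / sqrt (?f x)) *\<^sub>R x"
    have "qnorm Q (B *v y) \<in> ?S" using unit[OF False] by (auto simp: y_def)
    then have le: "qnorm Q (B *v y) \<le> qmnorm Q B" unfolding qmnorm_def by (rule cSup_upper[OF _ bdd])
    have "?f (B *v y) = (1 / sqrt (?f x))^2 * ?f (B *v x)"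
      unfolding y_def matrix_vector_mult_scaleR[of B] by (rule scale_quad)
    then have fBy: "?f (B *v y) = ?f (B *v x) / ?f x" using fx by (simp add: power_divide)
    have "sqrt (?f (B *v x) / ?f x) \<le> qmnorm Q B" using le fBy by (simp add: qnorm_def)
    moreover have fB0: "?f (B *v x) \<ge> 0" by (rule quad_nonneg[OF pd])
    ultimately have "(sqrt (?f (B *v x) / ?f x))^2 \<le> (qmnorm Q B)^2"
      using fx by (intro power_mono) auto
    moreover have "0 \<le> ?f (B *v x) / ?f x" using fx fB0 by simp
    ultimately have "?f (B *v x) / ?f x \<le> (qmnorm Q B)^2" by (simp only: real_sqrt_pow2)
    then show ?thesis using fx by (simp add: field_simps)
  qed
qed

lemma contraction:
  fixes Q Ab :: "real^'d^'d"
  assumes sym: "transpose Q = Q" and pd: "\<And>x. x \<noteq> 0 \<Longrightarrow> x \<bullet> (Q *v x) > 0"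
    and lyap: "transpose Ab ** Q + Q ** Ab = mat 1"
    and al: "0 < \<alpha>" "\<alpha> \<le> 1 / (2 * (qmnorm Q Ab)\<^sup>2 * spec_norm Q)"
  shows "((mat 1 - \<alpha> *\<^sub>R Ab) *v x) \<bullet> (Q *v ((mat 1 - \<alpha> *\<^sub>R Ab) *v x))
           \<le> (1 - \<alpha> / (2 * spec_norm Q)) * (x \<bullet> (Q *v x))"
proof -
  let ?f = "\<lambda>x::real^'d. x \<bullet> (Q *v x)"
  define N where "N = qmnorm Q Ab"
  define sQ where "sQ = spec_norm Q"
  have sQ: "sQ > 0" using spec_pos[OF pd] by (simp add: sQ_def)
  define y where "y = Ab *v x"
  have Bx: "(mat 1 - \<alpha> *\<^sub>R Ab) *v x = x - \<alpha> *\<^sub>R y"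
    by (simp add: y_def matrix_vector_mult_diff_rdistrib flip: scaleR_matrix_vector_assoc)
  have fB: "?f (x - \<alpha> *\<^sub>R y) = ?f x - \<alpha> * (x \<bullet> (Q *v y)) - \<alpha> * (y \<bullet> (Q *v x)) + \<alpha>^2 * ?f y"
    by (simp add: matrix_vector_mult_diff_distrib matrix_vector_mult_scaleR inner_diff_left
        inner_diff_right algebra_simps power2_eq_square)
  have xx: "x \<bullet> x = y \<bullet> (Q *v x) + x \<bullet> (Q *v y)"
  proof -
    have "x \<bullet> x = x \<bullet> ((transpose Ab ** Q + Q ** Ab) *v x)" using lyap by simp
    also have "\<dots> = x \<bullet> (transpose Ab *v (Q *v x)) + x \<bullet> (Q *v y)"
      by (simp add: matrix_vector_mult_add_rdistrib inner_add_right matrix_vector_mul_assoc y_def)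
    also have "x \<bullet> (transpose Ab *v (Q *v x)) = y \<bullet> (Q *v x)"
      by (simp only: dot_transpose y_def inner_commute)
    finally show ?thesis .
  qed
  have fy: "?f y \<le> N^2 * ?f x" unfolding y_def N_def by (rule qmnorm_bound[OF sym pd])
  have fx0: "?f x \<ge> 0" by (rule quad_nonneg[OF pd])
  have xx2: "?f x / sQ \<le> x \<bullet> x" using quad_le_spec[of x Q] sQ by (simp add: sQ_def field_simps)
  have aN: "\<alpha>^2 * N^2 \<le> \<alpha> / (2 * sQ)"
  proof (cases "N = 0")
    case True then show ?thesis using al sQ by simp
  next
    case False
    then have "2 * N^2 * sQ > 0" using sQ by simp
    then have "\<alpha> * (2 * N^2 * sQ) \<le> 1" using al(2) by (simp add: N_def sQ_def field_simps)
    then show ?thesis using al sQ by (simp add: field_simps power2_eq_square)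
  qed
  have "?f ((mat 1 - \<alpha> *\<^sub>R Ab) *v x) = ?f x - \<alpha> * (x \<bullet> x) + \<alpha>^2 * ?f y"
    unfolding Bx fB xx by (simp add: algebra_simps)
  also have "\<dots> \<le> ?f x - \<alpha> * (?f x / sQ) + \<alpha>^2 * (N^2 * ?f x)"
    using xx2 fy al by (intro add_mono diff_mono mult_left_mono) auto
  also have "\<dots> \<le> ?f x - \<alpha> * (?f x / sQ) + \<alpha> / (2 * sQ) * ?f x"
  proof -
    have "\<alpha>^2 * (N^2 * ?f x) \<le> \<alpha> / (2 * sQ) * ?f x"
      using mult_right_mono[OF aN fx0] by (simp add: mult.assoc)
    then show ?thesis by linarith
  qed
  also have "\<dots> = (1 - \<alpha> / (2 * sQ)) * ?f x" by (simp add: field_simps)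
  finally show ?thesis by (simp add: sQ_def)
qed

lemma mv_cont: "continuous_on UNIV (\<lambda>x::real^'n. A *v x)"
  by (intro linear_continuous_on) simp

lemma vec_nth_meas[measurable]:
  fixes f :: "'a \<Rightarrow> real^'n"
  shows "f \<in> borel_measurable N \<Longrightarrow> (\<lambda>x. f x $ i) \<in> borel_measurable N"
  by (rule borel_measurable_continuous_on[OF linear_continuous_on[OF bounded_linear_vec_nth]])

lemma mv_meas[measurable]:
  fixes A :: "real^'n^'m"
  shows "f \<in> borel_measurable N \<Longrightarrow> (\<lambda>x. A *v f x) \<in> borel_measurable N"
  by (rule borel_measurable_continuous_on[OF mv_cont])

lemma cosh_qstep:
  fixes Q :: "real^'d^'d"
  assumes sym: "transpose Q = Q" and pd: "\<And>x. x \<noteq> 0 \<Longrightarrow> x \<bullet> (Q *v x) > 0"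
    and mu: "\<mu> > 0" and c: "c > 0" and y: "sqrt (y \<bullet> (Q *v y)) \<le> c"
  shows "cosh (\<mu> * sqrt ((x + y) \<bullet> (Q *v (x + y))))
     \<le> cosh (\<mu> * sqrt (x \<bullet> (Q *v x))) * cosh (\<mu> * c)
        + KK (\<mu> * sqrt (x \<bullet> (Q *v x))) (\<mu> * c) * (\<mu>^2 * (x \<bullet> (Q *v y)))"
proof -
  define fx where "fx = x \<bullet> (Q *v x)"
  define fy where "fy = y \<bullet> (Q *v y)"
  define b where "b = x \<bullet> (Q *v y)"
  have fx0: "fx \<ge> 0" and fy0: "fy \<ge> 0" using quad_nonneg[OF pd] by (auto simp: fx_def fy_def)
  have cs: "\<bar>b\<bar> \<le> sqrt fx * sqrt fy" using qcs[OF sym pd] by (simp add: b_def fx_def fy_def)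
  have r: "0 \<le> \<mu> * sqrt fx" using mu fx0 by simp
  have s: "0 \<le> \<mu> * sqrt fy" "\<mu> * sqrt fy \<le> \<mu> * c" using mu fy0 y by (auto simp: fy_def)
  have u: "\<bar>\<mu>^2 * b\<bar> \<le> (\<mu> * sqrt fx) * (\<mu> * sqrt fy)"
    using cs mu by (simp add: abs_mult power2_eq_square mult_left_mono algebra_simps)
  have "cosh (sqrt ((\<mu> * sqrt fx)^2 + 2 * (\<mu>^2 * b) + (\<mu> * sqrt fy)^2))
      \<le> cosh (\<mu> * sqrt fx) * cosh (\<mu> * c) + KK (\<mu> * sqrt fx) (\<mu> * c) * (\<mu>^2 * b)"
    using c mu by (intro cosh_step_real[OF r s(1) s(2) _ u]) auto
  moreover have "(\<mu> * sqrt fx)^2 + 2 * (\<mu>^2 * b) + (\<mu> * sqrt fy)^2 = (\<mu>^2) * ((x + y) \<bullet> (Q *v (x + y)))"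
    using fx0 fy0 sym_dot[OF sym, of y x] by (simp add: quad_add[OF sym] power_mult_distrib fx_def fy_def b_def algebra_simps)
  moreover have "sqrt ((\<mu>^2) * ((x + y) \<bullet> (Q *v (x + y)))) = \<mu> * sqrt ((x + y) \<bullet> (Q *v (x + y)))"
    using mu by (simp add: real_sqrt_mult)
  ultimately show ?thesis by (simp add: fx_def b_def)
qed

lemma cosh_meas[measurable]: "(cosh :: real \<Rightarrow> real) \<in> borel_measurable borel"
  by (intro borel_measurable_continuous_onI continuous_intros)

lemma sinh_meas[measurable]: "(sinh :: real \<Rightarrow> real) \<in> borel_measurable borel"
  by (intro borel_measurable_continuous_onI continuous_intros)

lemma KK_alt: "KK r c = sinh r * sinh c / (r * c)"
  by (simp add: KK_def)

lemma KK_meas[measurable]: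
  assumes [measurable]: "f \<in> borel_measurable N"
  shows "(\<lambda>x. KK (f x) c) \<in> borel_measurable N"
  unfolding KK_alt by measurable

lemma KK_bound:
  assumes "0 \<le> r" "r \<le> R" "0 < R" "0 < c"
  shows "\<bar>KK r c\<bar> \<le> sinh R / R * (sinh c / c)"
proof (cases "r = 0")
  case True then show ?thesis using assms by (simp add: KK_def)
next
  case False
  then have r: "r > 0" using assms by simp
  have "KK r c = sinh r / r * (sinh c / c)" using r by (simp add: KK_def)
  then have e: "KK r c = sinh r / r * (sinh c / c)" by simp
  have m: "sinh r / r \<le> sinh R / R" using r assms by (intro sinh_div_mono) auto
  have n: "0 \<le> sinh r / r" "0 \<le> sinh c / c" using r assms by auto
  have "\<bar>KK r c\<bar> = sinh r / r * (sinh c / c)" unfolding e by (rule abs_of_nonneg) (rule mult_nonneg_nonneg[OF n])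
  also have "\<dots> \<le> sinh R / R * (sinh c / c)" by (rule mult_right_mono[OF m n(2)])
  finally show ?thesis .
qed

lemma (in prob_space) int_bdd:
  fixes f :: "'a \<Rightarrow> real"
  assumes "f \<in> borel_measurable M" "\<And>\<omega>. \<omega> \<in> space M \<Longrightarrow> \<bar>f \<omega>\<bar> \<le> K"
  shows "integrable M f"
  using assms by (intro integrable_const_bound[where B=K]) auto

lemma pow_le_cosh:
  fixes t \<mu> p :: real
  assumes t: "t \<ge> 0" and mu: "\<mu> > 0" and p: "p > 0"
  shows "t powr p \<le> 2 * (p / (exp 1 * \<mu>)) powr p * cosh (\<mu> * t)"
proof (cases "t = 0")
  case True
  then show ?thesis using mu p by simp
next
  case False
  then have tp: "t > 0" using t by simp
  have x: "\<mu> * t / p > 0" using tp mu p by simp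
  have "ln (\<mu> * t / p) \<le> \<mu> * t / p - 1" using x by (rule ln_le_minus_one)
  then have "ln \<mu> + ln t - ln p \<le> \<mu> * t / p - 1"
    using tp mu p by (simp add: ln_div ln_mult)
  then have "p * ln t \<le> p * (ln p - 1 - ln \<mu>) + \<mu> * t"
    using p by (simp add: field_simps)
  then have A: "exp (p * ln t) \<le> exp (p * (ln p - 1 - ln \<mu>) + \<mu> * t)" by simp
  have e: "exp (p * (ln p - 1 - ln \<mu>) + \<mu> * t) = (p / (exp 1 * \<mu>)) powr p * exp (\<mu> * t)"
    using p mu by (simp add: powr_def ln_div ln_mult exp_add)
  have B: "exp (\<mu> * t) \<le> 2 * cosh (\<mu> * t)" by (simp add: cosh_def)
  have C: "(p / (exp 1 * \<mu>)) powr p \<ge> 0" by simp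
  have "t powr p = exp (p * ln t)" using tp by (simp add: powr_def mult.commute)
  also have "\<dots> \<le> (p / (exp 1 * \<mu>)) powr p * exp (\<mu> * t)" using A e by simp
  also have "\<dots> \<le> (p / (exp 1 * \<mu>)) powr p * (2 * cosh (\<mu> * t))" by (rule mult_left_mono[OF B C])
  finally show ?thesis by simp
qed


locale jsetup = prob_space M for M :: "'w measure" +
  fixes Mz :: "'z measure" and Z :: "nat \<Rightarrow> 'w \<Rightarrow> 'z"
    and eps :: "'z \<Rightarrow> real^'d" and Q Ab :: "real^'d^'d" and \<alpha> Eb \<gamma> :: real
  assumes Mz: "prob_space Mz"
    and Z_meas: "\<And>k. k \<ge> 1 \<Longrightarrow> Z k \<in> M \<rightarrow>\<^sub>M Mz"
    and Z_indep: "indep_vars (\<lambda>_. Mz) Z {1..}"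
    and Z_distr: "\<And>k. k \<ge> 1 \<Longrightarrow> distr M Mz (Z k) = Mz"
    and eps_meas[measurable]: "eps \<in> borel_measurable Mz"
    and eps_bdd: "\<And>z. z \<in> space Mz \<Longrightarrow> norm (eps z) \<le> Eb"
    and eps_int0: "integral\<^sup>L Mz eps = 0"
    and sym: "transpose Q = Q" and pd: "\<And>x. x \<noteq> 0 \<Longrightarrow> x \<bullet> (Q *v x) > 0"
    and contr: "\<And>x. ((mat 1 - \<alpha> *\<^sub>R Ab) *v x) \<bullet> (Q *v ((mat 1 - \<alpha> *\<^sub>R Ab) *v x)) \<le> \<gamma> * (x \<bullet> (Q *v x))"
    and gam: "0 \<le> \<gamma>" "\<gamma> < 1" and alpha: "\<alpha> > 0" and Eb: "Eb > 0"
begin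

abbreviation "J \<equiv> J0 \<alpha> Ab eps Z"
abbreviation "B \<equiv> mat 1 - \<alpha> *\<^sub>R Ab"

lemma Zsuc_meas[measurable]: "Z (Suc k) \<in> M \<rightarrow>\<^sub>M Mz"
  using Z_meas by simp

lemma J_meas[measurable]: "J n \<in> borel_measurable M"
proof (induction n)
  case 0 then show ?case by simp
next
  case (Suc n)
  have "(\<lambda>\<omega>. B *v J n \<omega>) \<in> borel_measurable M" using Suc by measurable
  moreover have "(\<lambda>\<omega>. eps (Z (Suc n) \<omega>)) \<in> borel_measurable M" by measurable
  ultimately show ?case by (simp add: J0.simps(2)[abs_def])
qed

lemma J_bdd: "\<exists>R. \<forall>\<omega>\<in>space M. norm (J n \<omega>) \<le> R"
proof (induction n)
  case 0 then show ?case by auto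
next
  case (Suc n)
  then obtain R where R: "\<forall>\<omega>\<in>space M. norm (J n \<omega>) \<le> R" by blast
  have "norm (J (Suc n) \<omega>) \<le> spec_norm B * R + \<alpha> * Eb" if w: "\<omega> \<in> space M" for \<omega>
  proof -
    have Zw: "Z (Suc n) \<omega> \<in> space Mz" using measurable_space[OF Zsuc_meas w] .
    have "norm (J (Suc n) \<omega>) \<le> norm (B *v J n \<omega>) + norm (\<alpha> *\<^sub>R eps (Z (Suc n) \<omega>))"
      using norm_triangle_ineq4[of "B *v J n \<omega>" "\<alpha> *\<^sub>R eps (Z (Suc n) \<omega>)"] by simp
    also have "norm (B *v J n \<omega>) \<le> spec_norm B * norm (J n \<omega>)" by (rule spec_norm_mv)
    also have "\<dots> \<le> spec_norm B * R"
    proof -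
      have "spec_norm B \<ge> 0" unfolding spec_norm_def by (intro onorm_pos_le) simp
      then show ?thesis using R w by (intro mult_left_mono) auto
    qed
    also have "norm (\<alpha> *\<^sub>R eps (Z (Suc n) \<omega>)) \<le> \<alpha> * Eb"
      using eps_bdd[OF Zw] alpha by (simp add: mult_left_mono)
    finally show ?thesis by simp
  qed
  then show ?case by blast
qed

definition Jf :: "nat \<Rightarrow> (nat \<Rightarrow> 'z) \<Rightarrow> real^'d" where
  "Jf m f = J0 \<alpha> Ab eps (\<lambda>k (_::unit). f k) m ()"

lemma Jf_meas: "m \<le> n \<Longrightarrow> Jf m \<in> borel_measurable (PiM {1..n} (\<lambda>_. Mz))"
proof (induction m)
  case 0 then show ?case by (simp add: Jf_def)
next
  case (Suc m)
  have "(\<lambda>f. B *v Jf m f) \<in> borel_measurable (PiM {1..n} (\<lambda>_. Mz))"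
    using Suc by (intro mv_meas) auto
  moreover have "(\<lambda>f. f (Suc m)) \<in> PiM {1..n} (\<lambda>_. Mz) \<rightarrow>\<^sub>M Mz"
    using Suc by (intro measurable_component_singleton) auto
  then have "(\<lambda>f. eps (f (Suc m))) \<in> borel_measurable (PiM {1..n} (\<lambda>_. Mz))"
    by measurable
  ultimately show ?case unfolding Jf_def[abs_def] by simp
qed

lemma J_Jf: "m \<le> n \<Longrightarrow> J m \<omega> = Jf m (restrict (\<lambda>k. Z k \<omega>) {1..n})"
proof (induction m)
  case 0 then show ?case by (simp add: Jf_def)
next
  case (Suc m)
  then show ?case by (simp add: Jf_def)
qed

lemma eps_int: "integrable Mz eps"
proof -
  interpret Mz: prob_space Mz by (rule Mz)
  show ?thesis using eps_bdd by (intro Mz.integrable_const_bound[where B=Eb]) auto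
qed

lemma eps_comp_mean: "expectation (\<lambda>\<omega>. eps (Z (Suc n) \<omega>) $ i) = 0"
proof -
  have "expectation (\<lambda>\<omega>. eps (Z (Suc n) \<omega>) $ i) = integral\<^sup>L (distr M Mz (Z (Suc n))) (\<lambda>z. eps z $ i)"
    by (rule integral_distr[symmetric]) measurable
  also have "\<dots> = integral\<^sup>L Mz (\<lambda>z. eps z $ i)" using Z_distr[of "Suc n"] by simp
  also have "\<dots> = (integral\<^sup>L Mz eps) $ i"
    by (rule integral_bounded_linear[OF bounded_linear_vec_nth eps_int])
  finally show ?thesis using eps_int0 by simp
qed

lemma cross_zero:
  fixes h :: "real^'d \<Rightarrow> real^'d"
  assumes hm[measurable]: "h \<in> borel_measurable borel"
    and hb: "\<And>\<omega>. \<omega> \<in> space M \<Longrightarrow> norm (h (J n \<omega>)) \<le> H"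
  shows "expectation (\<lambda>\<omega>. h (J n \<omega>) \<bullet> eps (Z (Suc n) \<omega>)) = 0"
proof -
  let ?X1 = "\<lambda>\<omega>. restrict (\<lambda>k. Z k \<omega>) {1..n}"
  let ?X2 = "\<lambda>\<omega>. restrict (\<lambda>k. Z k \<omega>) {Suc n}"
  have ind: "indep_var (PiM {1..n} (\<lambda>_. Mz)) ?X1 (PiM {Suc n} (\<lambda>_. Mz)) ?X2"
    by (rule indep_var_restrict[OF Z_indep]) auto
  have trm: "expectation (\<lambda>\<omega>. h (J n \<omega>) $ i * eps (Z (Suc n) \<omega>) $ i) = 0" for i
  proof -
    define Y1 where "Y1 f = h (Jf n f) $ i" for f
    define Y2 where "Y2 f = eps (f (Suc n)) $ i" for f :: "nat \<Rightarrow> 'z"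
    have Y1m: "Y1 \<in> borel_measurable (PiM {1..n} (\<lambda>_. Mz))"
      unfolding Y1_def using Jf_meas[of n n] by measurable
    have "(\<lambda>f. f (Suc n)) \<in> PiM {Suc n} (\<lambda>_. Mz) \<rightarrow>\<^sub>M Mz"
      by (intro measurable_component_singleton) auto
    then have Y2m: "Y2 \<in> borel_measurable (PiM {Suc n} (\<lambda>_. Mz))"
      unfolding Y2_def by measurable
    have ind2: "indep_var borel (Y1 \<circ> ?X1) borel (Y2 \<circ> ?X2)"
      by (rule indep_var_compose[OF ind Y1m Y2m])
    have e1: "(Y1 \<circ> ?X1) = (\<lambda>\<omega>. h (J n \<omega>) $ i)"
      by (rule ext) (simp only: comp_def Y1_def J_Jf[OF order_refl])
    have e2: "(Y2 \<circ> ?X2) = (\<lambda>\<omega>. eps (Z (Suc n) \<omega>) $ i)"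
      by (rule ext) (simp add: Y2_def)
    have int1: "integrable M (\<lambda>\<omega>. h (J n \<omega>) $ i)"
      using hb by (intro integrable_const_bound[where B=H])
        (auto intro: order_trans[OF component_le_norm_cart])
    have int2: "integrable M (\<lambda>\<omega>. eps (Z (Suc n) \<omega>) $ i)"
    proof (rule integrable_const_bound[where B=Eb])
      show "AE \<omega> in M. norm (eps (Z (Suc n) \<omega>) $ i) \<le> Eb"
        using eps_bdd[OF measurable_space[OF Zsuc_meas]]
        by (intro AE_I2) (auto intro: order_trans[OF component_le_norm_cart])
    qed measurable
    have "expectation (\<lambda>\<omega>. h (J n \<omega>) $ i * eps (Z (Suc n) \<omega>) $ i)
        = expectation (\<lambda>\<omega>. h (J n \<omega>) $ i) * expectation (\<lambda>\<omega>. eps (Z (Suc n) \<omega>) $ i)"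
      using indep_var_lebesgue_integral[OF ind2[unfolded e1 e2] int1 int2] .
    then show ?thesis using eps_comp_mean by simp
  qed
  have "expectation (\<lambda>\<omega>. h (J n \<omega>) \<bullet> eps (Z (Suc n) \<omega>))
      = expectation (\<lambda>\<omega>. \<Sum>i\<in>UNIV. h (J n \<omega>) $ i * eps (Z (Suc n) \<omega>) $ i)"
    by (simp add: inner_vec_def)
  also have "\<dots> = (\<Sum>i\<in>UNIV. expectation (\<lambda>\<omega>. h (J n \<omega>) $ i * eps (Z (Suc n) \<omega>) $ i))"
  proof (rule Bochner_Integration.integral_sum[where f="\<lambda>i \<omega>. h (J n \<omega>) $ i * eps (Z (Suc n) \<omega>) $ i"])
    fix i :: 'd assume "i \<in> UNIV"
    show "integrable M (\<lambda>\<omega>. h (J n \<omega>) $ i * eps (Z (Suc n) \<omega>) $ i)"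
    proof (rule integrable_const_bound[where B="H * Eb"])
      show "AE \<omega> in M. norm (h (J n \<omega>) $ i * eps (Z (Suc n) \<omega>) $ i) \<le> H * Eb"
      proof (rule AE_I2)
        fix \<omega> assume w: "\<omega> \<in> space M"
        have "\<bar>h (J n \<omega>) $ i\<bar> \<le> H" using hb[OF w] by (rule order_trans[OF component_le_norm_cart])
        moreover have "\<bar>eps (Z (Suc n) \<omega>) $ i\<bar> \<le> Eb"
          using eps_bdd[OF measurable_space[OF Zsuc_meas w]] by (rule order_trans[OF component_le_norm_cart])
        ultimately show "norm (h (J n \<omega>) $ i * eps (Z (Suc n) \<omega>) $ i) \<le> H * Eb"
          by (simp add: abs_mult mult_mono)
      qed
    qed measurable
  qed
  also have "\<dots> = 0" using trm by simp
  finally show ?thesis .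
qed

definition "qq x = sqrt (x \<bullet> (Q *v x))"
definition "lmax = Max (real_eigenvalues Q)"
definition "cc = \<alpha> * sqrt lmax * Eb"

lemma lmax_pos: "lmax > 0"
proof -
  obtain i :: 'd where True by simp
  have "0 < axis i 1 \<bullet> (Q *v axis i (1::real))" by (rule pd) simp
  also have "\<dots> \<le> lmax * (axis i (1::real) \<bullet> axis i 1)" unfolding lmax_def by (rule eig_facts(4)[OF sym pd])
  finally show ?thesis by simp
qed

lemma cc_pos: "cc > 0" using lmax_pos alpha Eb by (simp add: cc_def)

lemma qq_nonneg: "qq x \<ge> 0" using quad_nonneg[OF pd] by (simp add: qq_def)

lemma qq_le_norm: "qq x \<le> sqrt lmax * norm x"
proof -
  have "x \<bullet> (Q *v x) \<le> lmax * (x \<bullet> x)" unfolding lmax_def by (rule eig_facts(4)[OF sym pd])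
  also have "\<dots> = (sqrt lmax * norm x)^2"
    using lmax_pos by (simp add: power_mult_distrib power2_norm_eq_inner)
  finally show ?thesis unfolding qq_def using lmax_pos by (simp add: real_le_lsqrt)
qed

lemma qq_eps: "z \<in> space Mz \<Longrightarrow> qq (- (\<alpha> *\<^sub>R eps z)) \<le> cc"
proof -
  assume z: "z \<in> space Mz"
  have "qq (- (\<alpha> *\<^sub>R eps z)) \<le> sqrt lmax * norm (- (\<alpha> *\<^sub>R eps z))" by (rule qq_le_norm)
  also have "\<dots> \<le> sqrt lmax * (\<alpha> * Eb)"
    using eps_bdd[OF z] alpha lmax_pos by (intro mult_left_mono) (auto intro: mult_left_mono)
  finally show ?thesis by (simp add: cc_def mult.left_commute)
qed

lemma qq_B: "qq (B *v x) \<le> sqrt \<gamma> * qq x"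
proof -
  have "(B *v x) \<bullet> (Q *v (B *v x)) \<le> \<gamma> * (x \<bullet> (Q *v x))" by (rule contr)
  then have "qq (B *v x) \<le> sqrt (\<gamma> * (x \<bullet> (Q *v x)))" unfolding qq_def by (rule real_sqrt_le_mono)
  then show ?thesis by (simp add: real_sqrt_mult qq_def)
qed

lemma qqJ_meas[measurable]: "(\<lambda>\<omega>. qq (J n \<omega>)) \<in> borel_measurable M"
  unfolding qq_def by measurable

lemma mgf: "\<mu> \<ge> 0 \<Longrightarrow> expectation (\<lambda>\<omega>. cosh (\<mu> * qq (J n \<omega>))) \<le> exp (\<mu>^2 * cc^2 / (2 * (1 - \<gamma>)))"
proof (induction n arbitrary: \<mu>)
  case 0
  have "expectation (\<lambda>\<omega>. cosh (\<mu> * qq (J 0 \<omega>))) = 1" by (simp add: qq_def prob_space)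
  also have "1 \<le> exp (\<mu>^2 * cc^2 / (2 * (1 - \<gamma>)))" using gam by simp
  finally show ?case .
next
  case (Suc n)
  show ?case
  proof (cases "\<mu> = 0")
    case True
    then show ?thesis using gam by (simp add: prob_space)
  next
    case False
    then have mu: "\<mu> > 0" using Suc.prems by simp
    obtain R where R: "\<And>\<omega>. \<omega> \<in> space M \<Longrightarrow> norm (J n \<omega>) \<le> R" using J_bdd[of n] by blast
    have R0: "R \<ge> 0" using R[of "SOME \<omega>. \<omega> \<in> space M"] some_in_eq not_empty
      by (metis norm_ge_zero order_trans)
    define sB where "sB = spec_norm B"
    have sB: "sB \<ge> 0" unfolding sB_def spec_norm_def by (intro onorm_pos_le) simp
    define R' where "R' = \<mu> * sqrt lmax * sB * R + 1"
    have "0 \<le> \<mu> * sqrt lmax * sB * R" using mu lmax_pos sB R0 by simp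
    then have R'p: "R' > 0" by (simp add: R'_def)
    define h where "h v = (- \<alpha> * \<mu>^2 * KK (\<mu> * qq (B *v v)) (\<mu> * cc)) *\<^sub>R (Q *v (B *v v))" for v
    have hm: "h \<in> borel_measurable borel" unfolding h_def qq_def by measurable
    define H where "H = \<alpha> * \<mu>^2 * (sinh R' / R' * (sinh (\<mu> * cc) / (\<mu> * cc))) * (spec_norm Q * (sB * R))"
    have hb: "norm (h (J n \<omega>)) \<le> H" if w: "\<omega> \<in> space M" for \<omega>
    proof -
      have nB: "norm (B *v J n \<omega>) \<le> sB * R"
        using spec_norm_mv[of B "J n \<omega>"] R[OF w] sB unfolding sB_def
        by (meson mult_left_mono order_trans)
      have r1: "\<mu> * qq (B *v J n \<omega>) \<le> R'"
      proof -
        have "qq (B *v J n \<omega>) \<le> sqrt lmax * (sB * R)"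
          using qq_le_norm[of "B *v J n \<omega>"] nB lmax_pos
          by (meson mult_left_mono order_trans real_sqrt_ge_zero less_imp_le)
        then have "\<mu> * qq (B *v J n \<omega>) \<le> \<mu> * (sqrt lmax * (sB * R))" using mu by simp
        then show ?thesis by (simp add: R'_def mult.assoc)
      qed
      have K: "\<bar>KK (\<mu> * qq (B *v J n \<omega>)) (\<mu> * cc)\<bar> \<le> sinh R' / R' * (sinh (\<mu> * cc) / (\<mu> * cc))"
        using r1 R'p mu cc_pos qq_nonneg by (intro KK_bound) auto
      have nQ: "norm (Q *v (B *v J n \<omega>)) \<le> spec_norm Q * (sB * R)"
        using spec_norm_mv[of Q "B *v J n \<omega>"] nB spec_pos[OF pd]
        by (meson mult_left_mono order_trans less_imp_le)
      have "norm (h (J n \<omega>)) = \<alpha> * \<mu>^2 * \<bar>KK (\<mu> * qq (B *v J n \<omega>)) (\<mu> * cc)\<bar> * norm (Q *v (B *v J n \<omega>))"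
        using alpha by (simp add: h_def abs_mult)
      also have "\<dots> \<le> H"
      proof -
        have Hf: "0 \<le> sinh R' / R' * (sinh (\<mu> * cc) / (\<mu> * cc))" using K abs_ge_zero order_trans by blast
        have "\<bar>KK (\<mu> * qq (B *v J n \<omega>)) (\<mu> * cc)\<bar> * norm (Q *v (B *v J n \<omega>))
            \<le> (sinh R' / R' * (sinh (\<mu> * cc) / (\<mu> * cc))) * (spec_norm Q * (sB * R))"
          by (rule mult_mono[OF K nQ Hf norm_ge_zero])
        then have "(\<alpha> * \<mu>^2) * (\<bar>KK (\<mu> * qq (B *v J n \<omega>)) (\<mu> * cc)\<bar> * norm (Q *v (B *v J n \<omega>)))
            \<le> (\<alpha> * \<mu>^2) * ((sinh R' / R' * (sinh (\<mu> * cc) / (\<mu> * cc))) * (spec_norm Q * (sB * R)))"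
          using alpha by (intro mult_left_mono) auto
        then show ?thesis unfolding H_def by (simp only: mult.assoc)
      qed
      finally show ?thesis .
    qed
    define K1 where "K1 = cosh (\<mu> * sqrt \<gamma> * (sqrt lmax * R))"
    have pw: "cosh (\<mu> * qq (J (Suc n) \<omega>)) \<le> cosh (\<mu> * sqrt \<gamma> * qq (J n \<omega>)) * cosh (\<mu> * cc) + h (J n \<omega>) \<bullet> eps (Z (Suc n) \<omega>)"
      if w: "\<omega> \<in> space M" for \<omega>
    proof -
      define x where "x = B *v J n \<omega>"
      define y where "y = - (\<alpha> *\<^sub>R eps (Z (Suc n) \<omega>))"
      have Zw: "Z (Suc n) \<omega> \<in> space Mz" using measurable_space[OF Zsuc_meas w] .
      have Jxy: "J (Suc n) \<omega> = x + y" by (simp add: x_def y_def)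
      have st: "cosh (\<mu> * qq (x + y)) \<le> cosh (\<mu> * qq x) * cosh (\<mu> * cc) + KK (\<mu> * qq x) (\<mu> * cc) * (\<mu>^2 * (x \<bullet> (Q *v y)))"
        using cosh_qstep[OF sym pd mu cc_pos, of y x] qq_eps[OF Zw] by (simp add: qq_def y_def)
      have c1: "cosh (\<mu> * qq x) \<le> cosh (\<mu> * sqrt \<gamma> * qq (J n \<omega>))"
        using qq_B[of "J n \<omega>"] mu qq_nonneg gam
        by (subst cosh_real_nonneg_le_iff) (auto simp: x_def mult.assoc)
      have cr: "KK (\<mu> * qq x) (\<mu> * cc) * (\<mu>^2 * (x \<bullet> (Q *v y))) = h (J n \<omega>) \<bullet> eps (Z (Suc n) \<omega>)"
        using sym_dot[OF sym, of x y] by (simp add: h_def x_def y_def inner_commute)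
      show ?thesis using st c1 cr Jxy cosh_real_pos[of "\<mu> * cc"]
        by (smt (verit) mult_right_mono)
    qed
    have i1: "integrable M (\<lambda>\<omega>. cosh (\<mu> * qq (J (Suc n) \<omega>)))"
    proof -
      obtain R2 where R2: "\<And>\<omega>. \<omega> \<in> space M \<Longrightarrow> norm (J (Suc n) \<omega>) \<le> R2" using J_bdd[of "Suc n"] by blast
      show ?thesis
      proof (rule int_bdd[where K="cosh (\<mu> * (sqrt lmax * R2))"])
        fix \<omega> assume w: "\<omega> \<in> space M"
        have a: "\<mu> * qq (J (Suc n) \<omega>) \<le> \<mu> * (sqrt lmax * R2)"
          using qq_le_norm[of "J (Suc n) \<omega>"] R2[OF w] mu lmax_pos
          by (meson mult_left_mono order_trans real_sqrt_ge_zero less_imp_le)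
        have b: "0 \<le> \<mu> * qq (J (Suc n) \<omega>)" using mu qq_nonneg by simp
        have "cosh (\<mu> * qq (J (Suc n) \<omega>)) \<le> cosh (\<mu> * (sqrt lmax * R2))"
          using cosh_real_nonneg_le_iff[OF b order_trans[OF b a]] a by simp
        then show "\<bar>cosh (\<mu> * qq (J (Suc n) \<omega>))\<bar> \<le> cosh (\<mu> * (sqrt lmax * R2))"
          by simp
      qed measurable
    qed
    have i2: "integrable M (\<lambda>\<omega>. cosh (\<mu> * sqrt \<gamma> * qq (J n \<omega>)))"
    proof (rule int_bdd[where K="cosh (\<mu> * sqrt \<gamma> * (sqrt lmax * R))"])
      fix \<omega> assume w: "\<omega> \<in> space M"
      have a: "\<mu> * sqrt \<gamma> * qq (J n \<omega>) \<le> \<mu> * sqrt \<gamma> * (sqrt lmax * R)"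
        using qq_le_norm[of "J n \<omega>"] R[OF w] mu lmax_pos gam
        by (intro mult_left_mono) (auto intro: order_trans mult_left_mono)
      have b: "0 \<le> \<mu> * sqrt \<gamma> * qq (J n \<omega>)" using mu qq_nonneg gam by simp
      have "cosh (\<mu> * sqrt \<gamma> * qq (J n \<omega>)) \<le> cosh (\<mu> * sqrt \<gamma> * (sqrt lmax * R))"
        using cosh_real_nonneg_le_iff[OF b order_trans[OF b a]] a by simp
      then show "\<bar>cosh (\<mu> * sqrt \<gamma> * qq (J n \<omega>))\<bar> \<le> cosh (\<mu> * sqrt \<gamma> * (sqrt lmax * R))"
        by simp
    qed measurable
    have i3: "integrable M (\<lambda>\<omega>. h (J n \<omega>) \<bullet> eps (Z (Suc n) \<omega>))"
    proof (rule int_bdd[where K="H * Eb"])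
      fix \<omega> assume w: "\<omega> \<in> space M"
      have "\<bar>h (J n \<omega>) \<bullet> eps (Z (Suc n) \<omega>)\<bar> \<le> norm (h (J n \<omega>)) * norm (eps (Z (Suc n) \<omega>))"
        by (rule Cauchy_Schwarz_ineq2)
      also have "\<dots> \<le> H * Eb"
        using hb[OF w] eps_bdd[OF measurable_space[OF Zsuc_meas w]]
        by (intro mult_mono) (auto intro: order_trans[OF norm_ge_zero])
      finally show "\<bar>h (J n \<omega>) \<bullet> eps (Z (Suc n) \<omega>)\<bar> \<le> H * Eb" .
    next
      show "(\<lambda>\<omega>. h (J n \<omega>) \<bullet> eps (Z (Suc n) \<omega>)) \<in> borel_measurable M"
        using hm by measurable
    qed
    let ?E2 = "expectation (\<lambda>\<omega>. cosh (\<mu> * sqrt \<gamma> * qq (J n \<omega>)))"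
    have "expectation (\<lambda>\<omega>. cosh (\<mu> * qq (J (Suc n) \<omega>)))
        \<le> expectation (\<lambda>\<omega>. cosh (\<mu> * sqrt \<gamma> * qq (J n \<omega>)) * cosh (\<mu> * cc) + h (J n \<omega>) \<bullet> eps (Z (Suc n) \<omega>))"
      using pw i1 i2 i3 by (intro integral_mono) auto
    also have "\<dots> = ?E2 * cosh (\<mu> * cc)
                   + expectation (\<lambda>\<omega>. h (J n \<omega>) \<bullet> eps (Z (Suc n) \<omega>))"
      using i2 i3 by simp
    also have "expectation (\<lambda>\<omega>. h (J n \<omega>) \<bullet> eps (Z (Suc n) \<omega>)) = 0"
      by (rule cross_zero[OF hm hb])
    finally have A: "expectation (\<lambda>\<omega>. cosh (\<mu> * qq (J (Suc n) \<omega>))) \<le> ?E2 * cosh (\<mu> * cc)" by simp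
    have B1: "?E2 \<le> exp ((\<mu> * sqrt \<gamma>)^2 * cc^2 / (2 * (1 - \<gamma>)))"
      using Suc.IH[of "\<mu> * sqrt \<gamma>"] mu gam by simp
    have B2: "cosh (\<mu> * cc) \<le> exp ((\<mu> * cc)^2 / 2)" by (rule cosh_le_exp_sq)
    have E20: "?E2 \<ge> 0" by (intro integral_nonneg_AE) auto
    have "expectation (\<lambda>\<omega>. cosh (\<mu> * qq (J (Suc n) \<omega>)))
        \<le> exp ((\<mu> * sqrt \<gamma>)^2 * cc^2 / (2 * (1 - \<gamma>))) * exp ((\<mu> * cc)^2 / 2)"
      using A mult_mono'[OF B1 B2 E20 cosh_real_nonneg] by simp
    also have "\<dots> = exp (\<mu>^2 * cc^2 / (2 * (1 - \<gamma>)))"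
      using gam by (simp add: mult_exp_exp power_mult_distrib field_simps)
    finally show ?thesis .
  qed
qed

definition "lmin = Min (real_eigenvalues Q)"
definition "sig = sqrt (cc^2 / (1 - \<gamma>))"

lemma lmin_pos: "lmin > 0" unfolding lmin_def by (rule eig_facts(2)[OF sym pd])

lemma sig_pos: "sig > 0" using cc_pos gam by (simp add: sig_def)

lemma norm_le_qq: "norm x \<le> qq x / sqrt lmin"
proof -
  have "lmin * (x \<bullet> x) \<le> x \<bullet> (Q *v x)" unfolding lmin_def by (rule eig_facts(3)[OF sym pd])
  then have "x \<bullet> x \<le> (x \<bullet> (Q *v x)) / lmin" using lmin_pos by (simp add: field_simps)
  then have "sqrt (x \<bullet> x) \<le> sqrt ((x \<bullet> (Q *v x)) / lmin)" by (rule real_sqrt_le_mono)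
  then show ?thesis by (simp add: qq_def norm_eq_sqrt_inner real_sqrt_divide)
qed

lemma cosh_int: "\<mu> \<ge> 0 \<Longrightarrow> integrable M (\<lambda>\<omega>. cosh (\<mu> * qq (J n \<omega>)))"
proof -
  assume mu: "\<mu> \<ge> 0"
  obtain R2 where R2: "\<And>\<omega>. \<omega> \<in> space M \<Longrightarrow> norm (J n \<omega>) \<le> R2" using J_bdd[of n] by blast
  show ?thesis
  proof (rule int_bdd[where K="cosh (\<mu> * (sqrt lmax * R2))"])
    fix \<omega> assume w: "\<omega> \<in> space M"
    have a: "\<mu> * qq (J n \<omega>) \<le> \<mu> * (sqrt lmax * R2)"
      using qq_le_norm[of "J n \<omega>"] R2[OF w] mu lmax_pos
      by (intro mult_left_mono) (auto intro: order_trans mult_left_mono)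
    have b: "0 \<le> \<mu> * qq (J n \<omega>)" using mu qq_nonneg by simp
    have "cosh (\<mu> * qq (J n \<omega>)) \<le> cosh (\<mu> * (sqrt lmax * R2))"
      using cosh_real_nonneg_le_iff[OF b order_trans[OF b a]] a by simp
    then show "\<bar>cosh (\<mu> * qq (J n \<omega>))\<bar> \<le> cosh (\<mu> * (sqrt lmax * R2))"
      by simp
  qed measurable
qed

lemma moment:
  assumes p: "p \<ge> 2"
  shows "expectation (\<lambda>\<omega>. norm (J n \<omega>) powr p) \<le> 2 * exp (- p / 2) * (sqrt p * sig / sqrt lmin) powr p"
proof -
  define \<mu> where "\<mu> = sqrt p / sig"
  have mu: "\<mu> > 0" using p sig_pos by (simp add: \<mu>_def)
  define K where "K = 2 * (p / (exp 1 * \<mu>)) powr p / (sqrt lmin powr p)"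
  have K0: "K \<ge> 0" by (simp add: K_def)
  have pw: "norm (J n \<omega>) powr p \<le> K * cosh (\<mu> * qq (J n \<omega>))" for \<omega>
  proof -
    have "norm (J n \<omega>) powr p \<le> (qq (J n \<omega>) / sqrt lmin) powr p"
      using norm_le_qq p by (intro powr_mono2) auto
    also have "\<dots> = qq (J n \<omega>) powr p / sqrt lmin powr p"
      using qq_nonneg lmin_pos by (simp add: powr_divide)
    also have "\<dots> \<le> (2 * (p / (exp 1 * \<mu>)) powr p * cosh (\<mu> * qq (J n \<omega>))) / sqrt lmin powr p"
      using pow_le_cosh[OF qq_nonneg mu, of p "J n \<omega>"] p lmin_pos by (intro divide_right_mono) auto
    also have "\<dots> = K * cosh (\<mu> * qq (J n \<omega>))" by (simp add: K_def)
    finally show ?thesis .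
  qed
  obtain R2 where R2: "\<And>\<omega>. \<omega> \<in> space M \<Longrightarrow> norm (J n \<omega>) \<le> R2" using J_bdd[of n] by blast
  have int1: "integrable M (\<lambda>\<omega>. norm (J n \<omega>) powr p)"
  proof (rule int_bdd[where K="\<bar>R2\<bar> powr p"])
    fix \<omega> assume w: "\<omega> \<in> space M"
    have "norm (J n \<omega>) powr p \<le> \<bar>R2\<bar> powr p" using R2[OF w] p by (intro powr_mono2) auto
    then show "\<bar>norm (J n \<omega>) powr p\<bar> \<le> \<bar>R2\<bar> powr p" by simp
  qed measurable
  have "expectation (\<lambda>\<omega>. norm (J n \<omega>) powr p) \<le> expectation (\<lambda>\<omega>. K * cosh (\<mu> * qq (J n \<omega>)))"
    using pw int1 cosh_int[of \<mu> n] mu by (intro integral_mono) auto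
  also have "\<dots> = K * expectation (\<lambda>\<omega>. cosh (\<mu> * qq (J n \<omega>)))" by simp
  also have "\<dots> \<le> K * exp (\<mu>^2 * cc^2 / (2 * (1 - \<gamma>)))"
    using mgf[of \<mu> n] mu K0 by (intro mult_left_mono) auto
  also have "\<mu>^2 * cc^2 / (2 * (1 - \<gamma>)) = p / 2"
  proof -
    have "sig^2 = cc^2 / (1 - \<gamma>)" using gam by (simp add: sig_def)
    then have cc2: "cc^2 = (1 - \<gamma>) * sig^2" using gam by (simp add: field_simps)
    have mu2: "\<mu>^2 = p / sig^2" using p by (simp add: \<mu>_def power_divide)
    show ?thesis unfolding cc2 mu2 using sig_pos gam by (simp add: field_simps)
  qed
  also have "K * exp (p / 2) = 2 * exp (- p / 2) * (sqrt p * sig / sqrt lmin) powr p"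
  proof -
    have pm: "p / (exp 1 * \<mu>) = (sqrt p * sig) / exp 1"
    proof -
      have "sqrt p * sqrt p = p" using p by simp
      then show ?thesis using p sig_pos by (simp add: \<mu>_def field_simps)
    qed
    have "(p / (exp 1 * \<mu>)) powr p = (sqrt p * sig) powr p / exp p"
      unfolding pm using p sig_pos
      by (simp add: powr_def ln_div exp_diff right_diff_distrib)
    then have "K = 2 * ((sqrt p * sig) powr p / sqrt lmin powr p) / exp p" by (simp add: K_def)
    also have "(sqrt p * sig) powr p / sqrt lmin powr p = (sqrt p * sig / sqrt lmin) powr p"
      using p sig_pos lmin_pos by (simp add: powr_divide)
    finally have "K = 2 * (sqrt p * sig / sqrt lmin) powr p / exp p" .
    moreover have "exp (p / 2) / exp p = exp (- p / 2)" by (simp add: exp_diff[symmetric])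
    ultimately show ?thesis by (simp add: field_simps)
  qed
  finally show ?thesis .
qed

end

lemma mvr_lin: "bounded_linear (\<lambda>X::real^'n^'m. X *v v)"
proof -
  have "linear (\<lambda>X::real^'n^'m. X *v v)"
    by (rule linearI) (simp_all add: matrix_vector_mult_add_rdistrib scaleR_matrix_vector_assoc)
  then show ?thesis by (simp add: linear_conv_bounded_linear)
qed

lemma mvr_meas[measurable]:
  fixes f :: "'a \<Rightarrow> real^'n^'m"
  shows "f \<in> borel_measurable N \<Longrightarrow> (\<lambda>x. f x *v v) \<in> borel_measurable N"
  by (rule borel_measurable_continuous_on[OF linear_continuous_on[OF mvr_lin]])

theorem proposition3:
  fixes Mz :: "'z measure" and M :: "'w measure"
    and A :: "'z \<Rightarrow> real^'d^'d" and b :: "'z \<Rightarrow> real^'d"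
    and Q :: "real^'d^'d" and Z :: "nat \<Rightarrow> 'w \<Rightarrow> 'z"
    and \<alpha> p :: real and n :: nat
  defines "Abar \<equiv> integral\<^sup>L Mz A"
    and "bbar \<equiv> integral\<^sup>L Mz b"
  defines "\<theta>s \<equiv> matrix_inv Abar *v bbar"
  defines "eps \<equiv> (\<lambda>z. (A z - Abar) *v \<theta>s - (b z - bbar))"
  defines "eps_inf \<equiv> (SUP z\<in>space Mz. norm (eps z))"
  defines "a \<equiv> 1 / (2 * spec_norm Q)"
  defines "\<alpha>_inf \<equiv> min (1 / (2 * (qmnorm Q Abar)\<^sup>2 * spec_norm Q)) (spec_norm Q)"
  defines "D1 \<equiv> sqrt (2 * kappa Q) / a"
  assumes Mz: "prob_space Mz"
    and A_meas: "A \<in> borel_measurable Mz"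
    and b_meas: "b \<in> borel_measurable Mz"
    and b_int: "integrable Mz b"
    and A_bdd: "\<exists>C. \<forall>z\<in>space Mz. spec_norm (A z) \<le> C"
    and At_bdd: "\<exists>C. \<forall>z\<in>space Mz. spec_norm (A z - Abar) \<le> C"
    and hurwitz: "pos_hurwitz Abar"
    and eps_bdd: "\<exists>C. \<forall>z\<in>space Mz. norm (eps z) \<le> C"
    and Q_sym: "transpose Q = Q"
    and Q_pd: "\<And>x. x \<noteq> 0 \<Longrightarrow> x \<bullet> (Q *v x) > 0"
    and Q_lyap: "transpose Abar ** Q + Q ** Abar = mat 1"
    and M: "prob_space M"
    and Z_meas: "\<And>k. k \<ge> 1 \<Longrightarrow> Z k \<in> M \<rightarrow>\<^sub>M Mz"
    and Z_indep: "prob_space.indep_vars M (\<lambda>_. Mz) Z {1..}"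
    and Z_distr: "\<And>k. k \<ge> 1 \<Longrightarrow> distr M Mz (Z k) = Mz"
    and \<alpha>_pos: "0 < \<alpha>" and \<alpha>_le: "\<alpha> \<le> \<alpha>_inf"
    and p_ge: "p \<ge> 2"
  shows "(prob_space.expectation M (\<lambda>\<omega>. norm (J0 \<alpha> Abar eps Z n \<omega>) powr p)) powr (1 / p)
           \<le> D1 * sqrt (\<alpha> * a * p) * eps_inf"
proof -
  interpret Mz: prob_space Mz by (rule Mz)
  interpret M: prob_space M by (rule M)
  have epsm[measurable]: "eps \<in> borel_measurable Mz"
    unfolding eps_def using A_meas b_meas by measurable
  obtain C where C: "\<forall>z\<in>space Mz. norm (eps z) \<le> C" using eps_bdd by blast
  have bdd: "bdd_above ((\<lambda>z. norm (eps z)) ` space Mz)" using C by (auto intro: bdd_aboveI2)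
  have eps_le: "norm (eps z) \<le> eps_inf" if "z \<in> space Mz" for z
    unfolding eps_inf_def using that bdd by (rule cSUP_upper)
  have Eb0: "eps_inf \<ge> 0"
  proof -
    obtain z where "z \<in> space Mz" using Mz.not_empty by blast
    then show ?thesis using eps_le[of z] norm_ge_zero order_trans by blast
  qed
  have sQ: "spec_norm Q > 0" by (rule spec_pos[OF Q_pd])
  have apos: "a > 0" using sQ by (simp add: a_def)
  have p0: "p > 0" using p_ge by simp
  show ?thesis
  proof (cases "eps_inf = 0")
    case True
    have e0: "eps z = 0" if "z \<in> space Mz" for z using eps_le[OF that] True by simp
    have J0: "J0 \<alpha> Abar eps Z m \<omega> = 0" if w: "\<omega> \<in> space M" for m \<omega>
    proof (induction m)
      case 0 then show ?case by simp
    next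
      case (Suc m)
      have "Z (Suc m) \<omega> \<in> space Mz" using measurable_space[OF Z_meas[of "Suc m"] w] by simp
      then show ?case using Suc by (simp add: e0)
    qed
    have "prob_space.expectation M (\<lambda>\<omega>. norm (J0 \<alpha> Abar eps Z n \<omega>) powr p) = prob_space.expectation M (\<lambda>\<omega>. 0)"
      by (rule Bochner_Integration.integral_cong) (simp_all add: J0)
    then show ?thesis using True p0 by simp
  next
    case False
    then have Eb: "eps_inf > 0" using Eb0 by simp
    define \<gamma> where "\<gamma> = 1 - \<alpha> * a"
    have al1: "\<alpha> \<le> 1 / (2 * (qmnorm Q Abar)\<^sup>2 * spec_norm Q)" and al2: "\<alpha> \<le> spec_norm Q"
      using \<alpha>_le by (auto simp: \<alpha>_inf_def)
    have aa: "\<alpha> * a \<le> 1/2" using al2 sQ by (simp add: a_def field_simps)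
    have gam: "0 \<le> \<gamma>" "\<gamma> < 1" using aa \<alpha>_pos apos by (auto simp: \<gamma>_def)
    have contr: "((mat 1 - \<alpha> *\<^sub>R Abar) *v x) \<bullet> (Q *v ((mat 1 - \<alpha> *\<^sub>R Abar) *v x)) \<le> \<gamma> * (x \<bullet> (Q *v x))" for x
      using contraction[OF Q_sym Q_pd Q_lyap \<alpha>_pos al1, of x] by (simp add: \<gamma>_def a_def)
    obtain CA where CA: "\<forall>z\<in>space Mz. spec_norm (A z) \<le> CA" using A_bdd by blast
    have A_int: "integrable Mz A"
    proof (rule Mz.integrable_const_bound[where B="real CARD('d) * real CARD('d) * CA"])
      show "AE z in Mz. norm (A z) \<le> real CARD('d) * real CARD('d) * CA"
      proof (rule AE_I2)
        fix z assume "z \<in> space Mz"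
        then have "spec_norm (A z) \<le> CA" using CA by blast
        then show "norm (A z) \<le> real CARD('d) * real CARD('d) * CA"
          using norm_le_spec[of "A z"] by (smt (verit) mult_left_mono of_nat_0_le_iff zero_le_mult_iff)
      qed
    qed (rule A_meas)
    have int1: "integrable Mz (\<lambda>z. (A z - Abar) *v \<theta>s)"
      using A_int by (intro integrable_bounded_linear[OF mvr_lin]) auto
    have int2: "integrable Mz (\<lambda>z. b z - bbar)" using b_int by auto
    have "integral\<^sup>L Mz eps = integral\<^sup>L Mz (\<lambda>z. (A z - Abar) *v \<theta>s) - integral\<^sup>L Mz (\<lambda>z. b z - bbar)"
      unfolding eps_def by (rule Bochner_Integration.integral_diff[OF int1 int2])
    also have "integral\<^sup>L Mz (\<lambda>z. (A z - Abar) *v \<theta>s) = (integral\<^sup>L Mz (\<lambda>z. A z - Abar)) *v \<theta>s"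
      using A_int by (intro integral_bounded_linear[OF mvr_lin]) auto
    also have "integral\<^sup>L Mz (\<lambda>z. A z - Abar) = 0"
      using A_int by (simp add: Abar_def Mz.prob_space)
    also have "integral\<^sup>L Mz (\<lambda>z. b z - bbar) = 0"
      using b_int by (simp add: bbar_def Mz.prob_space)
    finally have eps0: "integral\<^sup>L Mz eps = 0" by simp
    interpret J: jsetup M Mz Z eps Q Abar \<alpha> eps_inf \<gamma>
      by unfold_locales (use Mz Z_meas Z_indep Z_distr epsm eps_le eps0 Q_sym Q_pd contr gam \<alpha>_pos Eb in auto)
    define E where "E = prob_space.expectation M (\<lambda>\<omega>. norm (J0 \<alpha> Abar eps Z n \<omega>) powr p)"
    define Y where "Y = sqrt p * J.sig / sqrt J.lmin"
    have mom: "E \<le> 2 * exp (- p / 2) * Y powr p" unfolding E_def Y_def by (rule J.moment[OF p_ge])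
    have Y0: "Y \<ge> 0" using J.sig_pos J.lmin_pos p0 by (simp add: Y_def)
    have E0: "E \<ge> 0" unfolding E_def by (intro integral_nonneg_AE) auto
    have kap: "kappa Q = J.lmax / J.lmin" by (simp add: kappa_def J.lmax_def J.lmin_def)
    have kap0: "kappa Q \<ge> 0" using J.lmax_pos J.lmin_pos kap by simp
    have sig2': "J.sig^2 = J.cc^2 / (1 - \<gamma>)" unfolding J.sig_def using gam by simp
    have g1: "1 - \<gamma> = \<alpha> * a" by (simp add: \<gamma>_def)
    have sig2: "J.sig^2 = J.cc^2 / (\<alpha> * a)" using sig2' unfolding g1 .
    have X: "D1 * sqrt (\<alpha> * a * p) * eps_inf = sqrt 2 * Y"
    proof (rule power2_eq_imp_eq)
      have "(D1 * sqrt (\<alpha> * a * p) * eps_inf)^2 = 2 * kappa Q / a^2 * (\<alpha> * a * p) * eps_inf^2"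
        using kap0 apos \<alpha>_pos p0 by (simp add: D1_def power_mult_distrib power_divide)
      also have "\<dots> = 2 * p * J.sig^2 / J.lmin"
      proof -
        have cc2: "J.cc^2 = \<alpha>^2 * J.lmax * eps_inf^2" using J.lmax_pos by (simp add: J.cc_def power_mult_distrib)
        have s3: "J.sig^2 = \<alpha> * J.lmax * eps_inf^2 / a"
          unfolding sig2 cc2 using apos \<alpha>_pos by (simp add: field_simps power2_eq_square)
        show ?thesis unfolding s3 using apos \<alpha>_pos p0 J.lmin_pos J.lmax_pos
          by (simp add: kap field_simps power2_eq_square)
      qed
      also have "\<dots> = (sqrt 2 * Y)^2"
        using p0 J.lmin_pos by (simp add: Y_def power_mult_distrib power_divide)
      finally show "(D1 * sqrt (\<alpha> * a * p) * eps_inf)^2 = (sqrt 2 * Y)^2" .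
      show "0 \<le> D1 * sqrt (\<alpha> * a * p) * eps_inf" using kap0 apos Eb0 \<alpha>_pos p0 by (simp add: D1_def)
      show "0 \<le> sqrt 2 * Y" using Y0 by simp
    qed
    have s2: "sqrt 2 powr p = 2 powr (p / 2)"
      by (simp add: powr_half_sqrt[symmetric] powr_powr)
    have "2 * exp (- p / 2) * Y powr p \<le> 2 powr (p / 2) * Y powr p"
    proof (rule mult_right_mono)
      have "exp (- p / 2) \<le> 1" using p0 by simp
      then have "2 * exp (- p / 2) \<le> 2" by simp
      also have "(2::real) = 2 powr 1" by simp
      also have "\<dots> \<le> 2 powr (p / 2)" using p_ge by (intro powr_mono) auto
      finally show "2 * exp (- p / 2) \<le> 2 powr (p / 2)" .
    qed simp
    also have "\<dots> = (sqrt 2 * Y) powr p" using Y0 by (simp add: powr_mult s2)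
    finally have "E \<le> (sqrt 2 * Y) powr p" using mom by linarith
    then have "E powr (1 / p) \<le> ((sqrt 2 * Y) powr p) powr (1 / p)"
      using E0 p0 by (intro powr_mono2) auto
    also have "\<dots> = sqrt 2 * Y" using Y0 p0 by (simp add: powr_powr)
    finally show ?thesis unfolding E_def X .
  qed
qed

end
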